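(* Let $0<\alpha\le\beta<\infty$ and $M,\tilde M>0$ with $M/(2^{4\beta+1}\tilde M)\ge1$, and let $\rho=[M/(2^{2\beta+1}\tilde M)]^{1/\beta}$. Let $\zeta\in(0,1]$, let $\mathbf{c}_0$ be such that $\{\mathbf{x}:\|\mathbf{x}-\mathbf{c}_0\|_\infty\le\rho\zeta^{\alpha/\beta}\}\subset[0,1]^d$, and let $\mathbf{c}$ satisfy $\|\mathbf{c}-\mathbf{c}_0\|_\infty\le\rho\zeta^{\alpha/\beta}-\zeta$. Define $y:[0,1]^d\to\mathbb{R}$ by $y(\mathbf{x})=\frac M2\zeta^\alpha-\frac M2\|\mathbf{x}-\mathbf{c}\|_\infty^\alpha$ if $\|\mathbf{x}-\mathbf{c}\|_\infty\le\zeta$; $y(\mathbf{x})=0$ if $\|\mathbf{x}-\mathbf{c}\|_\infty>\zeta$ and $\|\mathbf{x}-\mathbf{c}_0\|_\infty\le\rho\zeta^{\alpha/\beta}$; $y(\mathbf{x})=2^\beta\tilde M\rho^\beta\zeta^\alpha-2^\beta\tilde M\|\mathbf{x}-\mathbf{c}_0\|_\infty^\beta$ if $\|\mathbf{x}-\mathbf{c}\|_\infty>\zeta$ and $\|\mathbf{x}-\mathbf{c}_0\|_\infty>\rho\zeta^{\alpha/\beta}$. Then $y$ has unique maximizer $\mathbf{x}^*=\mathbf{c}$ on $[0,1]^d$ and $\tilde M\|\mathbf{x}^*-\mathbf{x}\|_\infty^\beta\le|y(\mathbf{x}^* )-y(\mathbf{x})|\le M\|\mathbf{x}^*-\mathbf{x}\|_\infty^\alpha$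 for all $\mathbf{x}\in[0,1]^d$.
   Context: $\|\mathbf{x}\|_\infty=\max_l|x_l|$. The condition $M/(2^{4\beta+1}\tilde M)\ge1$ is a standing requirement imposed by the paper on the constants in this construction. *)

theory Defs
  imports "HOL-Analysis.Analysis"
begin

definition supnorm :: "real ^ 'd \<Rightarrow> real" where
  "supnorm x = Max (range (\<lambda>l. \<bar>x $ l\<bar>))"

definition unit_cube :: "(real ^ 'd) set" where
  "unit_cube = {x. \<forall>l. 0 \<le> x $ l \<and> x $ l \<le> 1}"

definition yfun :: "real \<Rightarrow> real \<Rightarrow> real \<Rightarrow> real \<Rightarrow> real \<Rightarrow> real \<Rightarrow> real ^ 'd \<Rightarrow> real ^ 'd \<Rightarrow> real ^ 'd \<Rightarrow> real" where
  "yfun \<alpha> \<beta> M Mt \<rho> \<zeta> c0 c x =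
     (if supnorm (x - c) \<le> \<zeta> then M / 2 * \<zeta> powr \<alpha> - M / 2 * supnorm (x - c) powr \<alpha>
      else if supnorm (x - c0) \<le> \<rho> * \<zeta> powr (\<alpha> / \<beta>) then 0
      else 2 powr \<beta> * Mt * \<rho> powr \<beta> * \<zeta> powr \<alpha> - 2 powr \<beta> * Mt * supnorm (x - c0) powr \<beta>)"

end

theory Submission
  imports Defs
begin


lemma supnorm_le_iff: "supnorm (x::real^'d) \<le> B \<longleftrightarrow> (\<forall>l. \<bar>x $ l\<bar> \<le> B)"
  unfolding supnorm_def by (subst Max_le_iff) auto

lemma supnorm_ge: "\<bar>(x::real^'d) $ l\<bar> \<le> supnorm x"
  unfolding supnorm_def by (rule Max_ge) auto

lemma supnorm_nonneg: "0 \<le> supnorm (x::real^'d)"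
  using supnorm_ge[of x] abs_ge_zero order_trans by blast

lemma supnorm_triangle: "supnorm ((x::real^'d) - y) \<le> supnorm (x - z) + supnorm (z - y)"
proof -
  have "\<bar>(x - y) $ l\<bar> \<le> supnorm (x - z) + supnorm (z - y)" for l
    using supnorm_ge[of "x - z" l] supnorm_ge[of "z - y" l] by simp
  then show ?thesis by (simp add: supnorm_le_iff)
qed

lemma supnorm_commute: "supnorm ((x::real^'d) - y) = supnorm (y - x)"
proof -
  have "\<And>a b::real^'d. supnorm (a - b) \<le> supnorm (b - a)"
    by (metis supnorm_ge supnorm_le_iff abs_minus_commute vector_minus_component)
  then show ?thesis by (meson order_antisym)
qed

lemma supnorm_zero: "supnorm ((x::real^'d) - y) = 0 \<Longrightarrow> x = y"
proof -
  assume "supnorm (x - y) = 0"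
  then have "\<bar>(x - y) $ l\<bar> \<le> 0" for l using supnorm_ge[of "x-y" l] by simp
  then show "x = y" by (simp add: vec_eq_iff)
qed

lemma supnorm_0: "supnorm (0::real^'d) = 0"
  using supnorm_nonneg[of "0::real^'d"] by (simp add: supnorm_le_iff order_antisym)

lemma supnorm_cube: "x \<in> unit_cube \<Longrightarrow> y \<in> unit_cube \<Longrightarrow> supnorm ((x::real^'d) - y) \<le> 1"
proof -
  assume a: "x \<in> unit_cube" "y \<in> unit_cube"
  have "\<bar>(x - y) $ l\<bar> \<le> 1" for l using a unfolding unit_cube_def
    by (smt (verit) mem_Collect_eq vector_minus_component)
  then show ?thesis by (simp add: supnorm_le_iff)
qed

theorem lemma4:
  fixes \<alpha> \<beta> M Mt \<rho> \<zeta> :: real and c0 c :: "real ^ 'd"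
  assumes "0 < \<alpha>" "\<alpha> \<le> \<beta>" "0 < M" "0 < Mt"
    and "M / (2 powr (4 * \<beta> + 1) * Mt) \<ge> 1"
    and "\<rho> = (M / (2 powr (2 * \<beta> + 1) * Mt)) powr (1 / \<beta>)"
    and "0 < \<zeta>" "\<zeta> \<le> 1"
    and "{x. supnorm (x - c0) \<le> \<rho> * \<zeta> powr (\<alpha> / \<beta>)} \<subseteq> unit_cube"
    and "supnorm (c - c0) \<le> \<rho> * \<zeta> powr (\<alpha> / \<beta>) - \<zeta>"
  shows "c \<in> unit_cube
    \<and> (\<forall>x\<in>unit_cube. x \<noteq> c \<longrightarrow> yfun \<alpha> \<beta> M Mt \<rho> \<zeta> c0 c x < yfun \<alpha> \<beta> M Mt \<rho> \<zeta> c0 c c)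
    \<and> (\<forall>x\<in>unit_cube.
         Mt * supnorm (c - x) powr \<beta> \<le> \<bar>yfun \<alpha> \<beta> M Mt \<rho> \<zeta> c0 c c - yfun \<alpha> \<beta> M Mt \<rho> \<zeta> c0 c x\<bar>
       \<and> \<bar>yfun \<alpha> \<beta> M Mt \<rho> \<zeta> c0 c c - yfun \<alpha> \<beta> M Mt \<rho> \<zeta> c0 c x\<bar> \<le> M * supnorm (c - x) powr \<alpha>)"
proof -
  note a = assms
  define R where "R = \<rho> * \<zeta> powr (\<alpha> / \<beta>)"
  define P where "P = M / (2 powr (2 * \<beta> + 1) * Mt)"
  define y where "y = yfun \<alpha> \<beta> M Mt \<rho> \<zeta> c0 c"
  have bpos: "\<beta> > 0" using a by linarith
  have P4: "P = 2 powr (2*\<beta>) * (M / (2 powr (4 * \<beta> + 1) * Mt))"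
  proof -
    have e: "2 powr (4 * \<beta> + 1) = 2 powr (2*\<beta>) * 2 powr (2*\<beta> + 1)"
      by (simp add: powr_add[symmetric])
    show ?thesis unfolding P_def e using a(4) by (simp add: field_simps)
  qed
  have P1: "P \<ge> 1"
  proof -
    have "2 powr (2*\<beta>) \<ge> (1::real)" using bpos by (simp add: ge_one_powr_ge_zero)
    then have "1 * 1 \<le> 2 powr (2*\<beta>) * (M / (2 powr (4 * \<beta> + 1) * Mt))"
      using a(5) by (intro mult_mono) auto
    then show ?thesis using P4 by simp
  qed
  have rho: "\<rho> = P powr (1/\<beta>)" using a(6) P_def by simp
  have rho1: "\<rho> \<ge> 1" using rho P1 bpos by (simp add: ge_one_powr_ge_zero)
  have rhoP: "\<rho> powr \<beta> = P" using rho P1 bpos by (simp add: powr_powr)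
  have RP: "R powr \<beta> = P * \<zeta> powr \<alpha>"
    unfolding R_def using rho1 a(7) bpos by (simp add: powr_mult powr_powr rhoP)
  have Rpos: "R > 0" unfolding R_def using rho1 a(7) by simp
  define K where "K = 2 powr \<beta> * Mt * P"
  have K: "K = M / 2 powr (\<beta> + 1)"
  proof -
    have e: "2 powr (2 * \<beta> + 1) = 2 powr \<beta> * 2 powr (\<beta> + 1)"
      by (simp add: powr_add[symmetric])
    show ?thesis unfolding K_def P_def e using a(4) by (simp add: field_simps)
  qed
  have KM: "K \<le> M / 2"
  proof -
    have "2 powr \<beta> \<ge> (1::real)" using bpos by (simp add: ge_one_powr_ge_zero)
    then have "2 powr (\<beta> + 1) \<ge> (2::real)" by (simp add: powr_add)
    then show ?thesis unfolding K using a(3) by (intro divide_left_mono) auto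
  qed
  have K4: "2 powr \<beta> * 2 powr \<beta> * Mt * P = M / 2"
  proof -
    have e1: "2 powr (2 * \<beta> + 1) = 2 powr \<beta> * 2 powr (\<beta> + 1)"
      by (simp add: powr_add[symmetric])
    have e2: "2 powr (\<beta> + 1) = 2 powr \<beta> * (2::real)"
      by (simp add: powr_add)
    have e: "2 powr (2 * \<beta> + 1) = 2 powr \<beta> * 2 powr \<beta> * (2::real)"
      unfolding e1 e2 by simp
    show ?thesis unfolding P_def e using a(4) by (simp add: field_simps)
  qed
  have MtM: "Mt \<le> M / 2"
  proof -
    have "2 powr (4*\<beta>) \<ge> (1::real)" using bpos by (simp add: ge_one_powr_ge_zero)
    then have "2 powr (4*\<beta> + 1) \<ge> (2::real)" by (simp add: powr_add)
    then have "2 * Mt \<le> 2 powr (4*\<beta> + 1) * Mt" using a(4) by simp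
    also have "\<dots> \<le> M" using a(5) a(4) by (simp add: field_simps)
    finally show ?thesis by simp
  qed
  have cc: "c \<in> unit_cube"
  proof -
    have "supnorm (c - c0) \<le> \<rho> * \<zeta> powr (\<alpha> / \<beta>)" using a(10) a(7) by linarith
    then show ?thesis using a(9) by blast
  qed
  have yc: "y c = M / 2 * \<zeta> powr \<alpha>" unfolding y_def yfun_def using a(7) by (simp add: supnorm_0)
  have main: "Mt * supnorm (c - x) powr \<beta> \<le> y c - y x \<and> y c - y x \<le> M * supnorm (c - x) powr \<alpha>"
    if x: "x \<in> unit_cube" for x
  proof -
    define r where "r = supnorm (x - c)"
    define s where "s = supnorm (x - c0)"
    define D where "D = supnorm (c - c0)"
    have rc: "supnorm (c - x) = r" unfolding r_def by (rule supnorm_commute)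
    have r0: "r \<ge> 0" "r \<le> 1" unfolding r_def using supnorm_nonneg supnorm_cube x cc by auto
    have s0: "s \<ge> 0" unfolding s_def using supnorm_nonneg by auto
    have D: "D \<le> R - \<zeta>" using a(10) D_def R_def by simp
    have t1: "r \<le> s + D" unfolding r_def s_def D_def
      by (metis supnorm_triangle supnorm_commute)
    have t2: "s \<le> r + D" unfolding r_def s_def D_def
      by (metis supnorm_triangle)
    have rbra: "r powr \<beta> \<le> r powr \<alpha>"
      using r0 a(2) by (cases "r = 0") (auto intro: powr_mono')
    show ?thesis
    proof (cases "r \<le> \<zeta>")
      case True
      have "y c - y x = M/2 * r powr \<alpha>" unfolding yc unfolding y_def yfun_def r_def[symmetric]
        using True by simp
      moreover have "Mt * r powr \<beta> \<le> M/2 * r powr \<alpha>"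
        using MtM rbra a(4) by (meson mult_mono less_eq_real_def powr_ge_zero order_trans)
      moreover have "M/2 * r powr \<alpha> \<le> M * r powr \<alpha>" using a(3) by simp
      ultimately show ?thesis unfolding rc by linarith
    next
      case False
      note rz = False
      have za: "\<zeta> powr \<alpha> \<le> r powr \<alpha>" using rz a(1,7) by (simp add: powr_mono2)
      show ?thesis
      proof (cases "s \<le> R")
        case True
        have "y c - y x = M/2 * \<zeta> powr \<alpha>" unfolding yc unfolding y_def yfun_def
          r_def[symmetric] s_def[symmetric] R_def[symmetric] using True rz by simp
        moreover have "Mt * r powr \<beta> \<le> M/2 * \<zeta> powr \<alpha>"
        proof -
          have "r \<le> 2 * R" using t1 D True a(7) by linarith
          then have "r powr \<beta> \<le> (2*R) powr \<beta>" using r0 bpos by (simp add: powr_mono2)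
          also have "\<dots> = 2 powr \<beta> * P * \<zeta> powr \<alpha>" using Rpos by (simp add: powr_mult RP)
          finally have "Mt * r powr \<beta> \<le> K * \<zeta> powr \<alpha>" unfolding K_def using a(4)
            by (simp add: mult.assoc mult_left_mono)
          also have "\<dots> \<le> M/2 * \<zeta> powr \<alpha>" using KM by (intro mult_right_mono) auto
          finally show ?thesis .
        qed
        moreover have "M/2 * \<zeta> powr \<alpha> \<le> M * r powr \<alpha>"
        proof -
          have "M/2 * \<zeta> powr \<alpha> \<le> M/2 * r powr \<alpha>" using za a(3) by (intro mult_left_mono) auto
          moreover have "M/2 * r powr \<alpha> \<le> M * r powr \<alpha>" using a(3) by simp
          ultimately show ?thesis by linarith
        qed
        ultimately show ?thesis unfolding rc by linarith
      next
        case False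
        have yx: "y x = K * \<zeta> powr \<alpha> - 2 powr \<beta> * Mt * s powr \<beta>"
          unfolding y_def yfun_def K_def
          r_def[symmetric] s_def[symmetric] R_def[symmetric] using False rz rhoP by simp
        have low0: "0 \<le> (M/2 - K) * \<zeta> powr \<alpha>" using KM by (intro mult_nonneg_nonneg) auto
        have "r \<le> 2 * s" using t1 D False a(7) by linarith
        then have "r powr \<beta> \<le> (2 * s) powr \<beta>" using r0 bpos by (simp add: powr_mono2)
        also have "\<dots> = 2 powr \<beta> * s powr \<beta>" using s0 by (simp add: powr_mult)
        finally have lo: "Mt * r powr \<beta> \<le> 2 powr \<beta> * Mt * s powr \<beta>" using a(4)
          by (simp add: mult_left_mono mult.assoc mult.left_commute)
        have "\<zeta> powr (\<alpha>/\<beta>) \<le> r powr (\<alpha>/\<beta>)" using rz a(1,7) bpos by (simp add: powr_mono2)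
        moreover have "r \<le> r powr (\<alpha>/\<beta>)"
        proof -
          have "r powr 1 \<le> r powr (\<alpha>/\<beta>)" using r0 rz a(1,2,7) bpos
            by (intro powr_mono') (auto simp: field_simps)
          then show ?thesis using r0 rz a(7) by simp
        qed
        ultimately have "R \<le> \<rho> * r powr (\<alpha>/\<beta>)" "r \<le> r powr (\<alpha>/\<beta>)" using rho1 unfolding R_def
          by (auto intro: mult_left_mono)
        then have "s \<le> r powr (\<alpha>/\<beta>) + \<rho> * r powr (\<alpha>/\<beta>)" using t2 D a(7) by linarith
        then have "s \<le> (1 + \<rho>) * r powr (\<alpha>/\<beta>)" by (simp add: distrib_right)
        also have "\<dots> \<le> 2 * \<rho> * r powr (\<alpha>/\<beta>)" using rho1 by (simp add: mult_right_mono)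
        finally have "s powr \<beta> \<le> (2 * \<rho> * r powr (\<alpha>/\<beta>)) powr \<beta>" using s0 bpos by (simp add: powr_mono2)
        also have "\<dots> = 2 powr \<beta> * P * r powr \<alpha>" using rho1 bpos rz a(7)
          by (simp add: powr_mult powr_powr rhoP)
        finally have "2 powr \<beta> * Mt * s powr \<beta> \<le> 2 powr \<beta> * Mt * (2 powr \<beta> * P * r powr \<alpha>)"
          using a(4) by (simp add: mult_left_mono)
        also have "\<dots> = M/2 * r powr \<alpha>" using K4 by (simp add: algebra_simps)
        finally have up: "2 powr \<beta> * Mt * s powr \<beta> \<le> M/2 * r powr \<alpha>" .
        have "M/2 * \<zeta> powr \<alpha> \<le> M/2 * r powr \<alpha>" using za a(3) by simp
        have K0: "0 \<le> K * \<zeta> powr \<alpha>" unfolding K_def using P1 a(4) by simp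
        then show ?thesis unfolding rc yc yx using lo up low0 \<open>M/2 * \<zeta> powr \<alpha> \<le> M/2 * r powr \<alpha>\<close>
          by (simp add: algebra_simps)
      qed
    qed
  qed
  show ?thesis
  proof (intro conjI ballI impI)
    show "c \<in> unit_cube" by (rule cc)
  next
    fix x :: "real^'d" assume x: "x \<in> unit_cube" "x \<noteq> c"
    have "supnorm (c - x) \<noteq> 0" using x(2) supnorm_zero by metis
    then have "supnorm (c - x) > 0" using supnorm_nonneg by (simp add: less_le)
    then have "Mt * supnorm (c - x) powr \<beta> > 0" using a(4) by simp
    then show "yfun \<alpha> \<beta> M Mt \<rho> \<zeta> c0 c x < yfun \<alpha> \<beta> M Mt \<rho> \<zeta> c0 c c"
      using main[OF x(1)] unfolding y_def by linarith
  next
    fix x :: "real^'d" assume x: "x \<in> unit_cube"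
    have "0 \<le> Mt * supnorm (c - x) powr \<beta>" using a(4) by simp
    then show "Mt * supnorm (c - x) powr \<beta> \<le> \<bar>yfun \<alpha> \<beta> M Mt \<rho> \<zeta> c0 c c - yfun \<alpha> \<beta> M Mt \<rho> \<zeta> c0 c x\<bar>"
      "\<bar>yfun \<alpha> \<beta> M Mt \<rho> \<zeta> c0 c c - yfun \<alpha> \<beta> M Mt \<rho> \<zeta> c0 c x\<bar> \<le> M * supnorm (c - x) powr \<alpha>"
      using main[OF x] unfolding y_def by linarith+
  qed
qed

end
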